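(* Let $N\to\infty$, let $h=h(N)$ satisfy $h\to\infty$ and $h=o(N)$, and let $Q=Q(N)\to\infty$ with $Q\ll N$. Let $g:\mathbb{N}\to\mathbb{R}$ satisfy, for every $\varepsilon>0$, $g(q)\ll_{\varepsilon}N^{\varepsilon}$ for all $q\le Q$. Let $f:\mathbb{N}\cup\{0\}\to\mathbb{R}$ and $S_f(\alpha)=\Re\sum_{0\le n\le N}f(n)e(n\alpha)$. If $S_f(\alpha)\ge0$ for all $\alpha\in[0,1]$, then $$\sum_{q\le Q}\frac{g(q)}{q}\sum_{j\,(\mathrm{mod}\,q)}\widehat{W}\Big(\frac jq\Big)S_f\Big(-\frac jq\Big)\lll\sum_{q\le Q}\frac1q\sum_{j\,(\mathrm{mod}\,q)}\widehat{W}\Big(\frac jq\Big)S_f\Big(-\frac jq\Big).$$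
   Context: $e(x)=e^{2\pi i x}$. For integers $a\in[-2h,2h]$, $W(a)=\max(2h-3|a|,\,|a|-2h)$, and $W(a)=0$ otherwise. Its discrete Fourier transform is $\widehat{W}(\beta)=\sum_a W(a)e(a\beta)$ for $\beta\in\mathbb{R}$. The inner sums run over a complete residue system modulo $q$. The notation $A\lll B$ means: for every $\varepsilon>0$, $A\ll_{\varepsilon}N^{\varepsilon}B$. *)

theory Defs
  imports "HOL-Analysis.Analysis"
begin

definition ee :: "real \<Rightarrow> complex" where
  "ee x = exp (2 * of_real pi * \<i> * of_real x)"

definition W :: "real \<Rightarrow> int \<Rightarrow> real" where
  "W h a = (if - 2 * h \<le> real_of_int a \<and> real_of_int a \<le> 2 * h
            then max (2 * h - 3 * \<bar>real_of_int a\<bar>) (\<bar>real_of_int a\<bar> - 2 * h) else 0)"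

text \<open>Discrete Fourier transform of W; W vanishes outside [-2h,2h].\<close>
definition W_hat :: "real \<Rightarrow> real \<Rightarrow> complex" where
  "W_hat h \<beta> = (\<Sum>a\<in>{-\<lfloor>2*h\<rfloor>..\<lfloor>2*h\<rfloor>}. of_real (W h a) * ee (real_of_int a * \<beta>))"

definition S :: "(nat \<Rightarrow> real) \<Rightarrow> nat \<Rightarrow> real \<Rightarrow> real" where
  "S f N \<alpha> = Re (\<Sum>n\<le>N. of_real (f n) * ee (real n * \<alpha>))"

definition Msum :: "(nat \<Rightarrow> real) \<Rightarrow> real \<Rightarrow> real \<Rightarrow> (nat \<Rightarrow> real) \<Rightarrow> nat \<Rightarrow> complex" where
  "Msum c h Q f N = (\<Sum>q\<in>{q::nat. 1 \<le> q \<and> real q \<le> Q}.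
      of_real (c q / real q) *
      (\<Sum>j<q. W_hat h (real j / real q) * of_real (S f N (- real j / real q))))"

end

theory Submission
  imports Defs
begin

definition Dc :: "real \<Rightarrow> real \<Rightarrow> real" where
  "Dc c x = c + 2 * (\<Sum>k=1..nat \<lfloor>c\<rfloor>. (c - real k) * cos (real k * x))"

lemma cos_sum3: "cos (real (Suc (Suc m)) * x) + cos (real m * x) = 2 * cos (real (Suc m) * x) * cos x"
proof -
  have "cos (real (Suc (Suc m)) * x) = cos (real (Suc m) * x + x)" by (simp add: algebra_simps)
  moreover have "cos (real m * x) = cos (real (Suc m) * x - x)" by (simp add: algebra_simps)
  ultimately show ?thesis by (simp add: cos_add cos_diff)
qed

lemma id_gen: "(1 - cos x) * (c + 2 * (\<Sum>k=1..m. (c - real k) * cos (real k * x)))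
   = 1 - (real m + 1 - c) * cos (real m * x) - (c - real m) * cos (real (Suc m) * x)"
proof (induction m)
  case 0
  then show ?case by (simp add: algebra_simps)
next
  case (Suc m)
  have "(1 - cos x) * (c + 2 * (\<Sum>k=1..Suc m. (c - real k) * cos (real k * x)))
     = (1 - cos x) * (c + 2 * (\<Sum>k=1..m. (c - real k) * cos (real k * x)))
       + 2 * (c - real (Suc m)) * cos (real (Suc m) * x) * (1 - cos x)"
    by (simp add: algebra_simps)
  also have "\<dots> = 1 - (real m + 1 - c) * cos (real m * x) - (c - real m) * cos (real (Suc m) * x)
       + 2 * (c - real (Suc m)) * cos (real (Suc m) * x) * (1 - cos x)" using Suc by simp
  also have "\<dots> = 1 - (real (Suc m) + 1 - c) * cos (real (Suc m) * x) - (c - real (Suc m)) * cos (real (Suc (Suc m)) * x)"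
  proof -
    have e: "cos (real (Suc (Suc m)) * x) = 2 * cos (real (Suc m) * x) * cos x - cos (real m * x)"
      using cos_sum3[of m x] by linarith
    show ?thesis unfolding e by (simp add: algebra_simps)
  qed
  finally show ?case .
qed

lemma cos_half: "cos (real k * x) = 1 - 2 * (sin (real k * x / 2))^2"
  using cos_double_sin[of "real k * x / 2"] by simp

lemma F_form: "1 - (real m + 1 - c) * cos (real m * x) - (c - real m) * cos (real (Suc m) * x)
  = 2 * ((real m + 1 - c) * (sin (real m * x / 2))^2 + (c - real m) * (sin (real (Suc m) * x / 2))^2)"
  unfolding cos_half[of m x] cos_half[of "Suc m" x] by (simp add: algebra_simps)

lemma sin_2m: "\<bar>sin (real (2*m) * x / 2)\<bar> \<le> 2 * \<bar>sin (real m * x / 2)\<bar>"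
proof -
  have "sin (real (2*m) * x / 2) = sin (2 * (real m * x / 2))" by simp
  also have "\<dots> = 2 * sin (real m * x / 2) * cos (real m * x / 2)" by (rule sin_double)
  finally have "\<bar>sin (real (2*m) * x / 2)\<bar> = 2 * \<bar>sin (real m * x / 2)\<bar> * \<bar>cos (real m * x / 2)\<bar>"
    by (simp add: abs_mult)
  also have "\<dots> \<le> 2 * \<bar>sin (real m * x / 2)\<bar> * 1"
    by (intro mult_left_mono) auto
  finally show ?thesis by simp
qed

lemma sin_2m1: "\<bar>sin (real (2*m+1) * x / 2)\<bar> \<le> \<bar>sin (real m * x / 2)\<bar> + \<bar>sin (real (Suc m) * x / 2)\<bar>"
proof -
  have "real (2*m+1) * x / 2 = real m * x / 2 + real (Suc m) * x / 2" by (simp add: field_simps)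
  then have "sin (real (2*m+1) * x / 2) = sin (real m * x / 2 + real (Suc m) * x / 2)" by (rule arg_cong)
  also have "\<dots> = sin (real m * x / 2) * cos (real (Suc m) * x / 2) + cos (real m * x / 2) * sin (real (Suc m) * x / 2)"
    by (rule sin_add)
  finally have e: "sin (real (2*m+1) * x / 2) = \<dots>" .
  have "\<bar>sin (real m * x / 2) * cos (real (Suc m) * x / 2)\<bar> \<le> \<bar>sin (real m * x / 2)\<bar>"
    by (simp add: abs_mult mult_left_le)
  moreover have "\<bar>cos (real m * x / 2) * sin (real (Suc m) * x / 2)\<bar> \<le> \<bar>sin (real (Suc m) * x / 2)\<bar>"
    unfolding abs_mult by (rule mult_left_le_one_le) (auto simp: abs_cos_le_one)
  ultimately show ?thesis unfolding e by (smt (verit) abs_triangle_ineq)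
qed

lemma sq_le: "\<bar>a::real\<bar> \<le> b \<Longrightarrow> a^2 \<le> b^2"
  by (metis abs_le_square_iff abs_of_nonneg abs_ge_zero order.trans)

lemma cos_one_all: assumes "cos x = 1" shows "cos (real k * x) = 1"
proof (induction k)
  case 0 then show ?case by simp
next
  case (Suc k)
  have "sin x = 0" using assms sin_cos_squared_add[of x] by simp
  have "cos (real (Suc k) * x) = cos (real k * x + x)" by (simp add: algebra_simps)
  also have "\<dots> = 1" using Suc \<open>sin x = 0\<close> assms by (simp add: cos_add)
  finally show ?case .
qed

lemma sum_lin: "(\<Sum>k=1..m. (c - real k)) = real m * c - real m * (real m + 1) / 2"
  by (induction m) (auto simp: field_simps)

lemma Dc_pos: assumes h: "0 \<le> h" shows "0 \<le> 4 * Dc h x - Dc (2*h) x"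
proof -
  define m where "m = nat \<lfloor>h\<rfloor>"
  define t where "t = h - real m"
  have hm: "real m = of_int \<lfloor>h\<rfloor>" using h by (simp add: m_def)
  have t0: "0 \<le> t" and t1: "t < 1" unfolding t_def hm by linarith+
  have n2: "nat \<lfloor>2*h\<rfloor> = (if t < 1/2 then 2*m else 2*m+1)"
  proof (cases "t < 1/2")
    case True
    have "\<lfloor>2*h\<rfloor> = int (2*m)" using True t0 unfolding t_def by (intro floor_unique) auto
    then show ?thesis using True by simp
  next
    case False
    have "\<lfloor>2*h\<rfloor> = int (2*m+1)" using False t1 unfolding t_def by (intro floor_unique) auto
    then show ?thesis using False by simp
  qed
  show ?thesis
  proof (cases "cos x = 1")
    case True
    have D: "Dc c x = c + 2 * (real (nat \<lfloor>c\<rfloor>) * c - real (nat \<lfloor>c\<rfloor>) * (real (nat \<lfloor>c\<rfloor>) + 1) / 2)" for c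
      unfolding Dc_def cos_one_all[OF True] by (simp only: mult_1_right sum_lin)
    show ?thesis
    proof (cases "t < 1/2")
      case True
      then show ?thesis unfolding D n2 m_def[symmetric] using t0 t1 unfolding t_def
        by (simp add: field_simps)
    next
      case False
      then show ?thesis unfolding D n2 m_def[symmetric] using t0 t1 unfolding t_def
        by (simp add: field_simps)
    qed
  next
    case False
    have pos: "0 < 1 - cos x" using False cos_le_one[of x] by linarith
    define a where "a = \<bar>sin (real m * x / 2)\<bar>"
    define b where "b = \<bar>sin (real (Suc m) * x / 2)\<bar>"
    have Dh: "(1 - cos x) * Dc h x = 2 * ((1 - t) * a^2 + t * b^2)"
      unfolding Dc_def m_def[symmetric] id_gen F_form a_def b_def t_def by simp
    have key: "0 \<le> (1 - cos x) * (4 * Dc h x - Dc (2*h) x)"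
    proof (cases "t < 1/2")
      case True
      define A where "A = (sin (real (2*m) * x / 2))^2"
      define B where "B = (sin (real (Suc (2*m)) * x / 2))^2"
      have D2: "(1 - cos x) * Dc (2*h) x = 2 * ((1 - 2*t) * A + 2*t * B)"
        unfolding Dc_def n2 using True unfolding id_gen F_form A_def B_def t_def by (simp add: algebra_simps)
      have A: "A \<le> 4 * a^2" unfolding A_def a_def using sq_le[OF sin_2m[of m x]] by (simp add: power_mult_distrib)
      have B: "B \<le> (a + b)^2" unfolding B_def a_def b_def using sq_le[OF sin_2m1[of m x]] by simp
      have "0 \<le> (1 - 2*t) * (4 * a^2 - A)" using A True by simp
      moreover have "0 \<le> t * ((a+b)^2 - B)" using B t0 by simp
      moreover have "0 \<le> t * (a - b)^2" using t0 by simp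
      moreover have "(1 - cos x) * (4 * Dc h x - Dc (2*h) x) = 4 * ((1 - cos x) * Dc h x) - (1 - cos x) * Dc (2*h) x"
        by (simp add: algebra_simps)
      ultimately show ?thesis unfolding Dh D2
        by (simp add: algebra_simps power2_eq_square)
    next
      case False
      define A where "A = (sin (real (2*m+1) * x / 2))^2"
      define B where "B = (sin (real (2*(Suc m)) * x / 2))^2"
      have D2: "(1 - cos x) * Dc (2*h) x = 2 * ((2 - 2*t) * A + (2*t - 1) * B)"
        unfolding Dc_def n2 using False unfolding id_gen F_form A_def B_def t_def by (simp add: algebra_simps)
      have A: "A \<le> (a + b)^2" unfolding A_def a_def b_def using sq_le[OF sin_2m1[of m x]] by simp
      have B: "B \<le> 4 * b^2" unfolding B_def b_def using sq_le[OF sin_2m[of "Suc m" x]] by (simp add: power_mult_distrib)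
      have "0 \<le> (2*t - 1) * (4 * b^2 - B)" using B False by simp
      moreover have "0 \<le> (1 - t) * ((a+b)^2 - A)" using A t1 by simp
      moreover have "0 \<le> (1 - t) * (a - b)^2" using t1 by simp
      moreover have "(1 - cos x) * (4 * Dc h x - Dc (2*h) x) = 4 * ((1 - cos x) * Dc h x) - (1 - cos x) * Dc (2*h) x"
        by (simp add: algebra_simps)
      ultimately show ?thesis unfolding Dh D2
        by (simp add: algebra_simps power2_eq_square)
    qed
    show ?thesis using key pos by (simp add: zero_le_mult_iff)
  qed
qed

lemma ee_eq: "ee y = complex_of_real (cos (2*pi*y)) + \<i> * complex_of_real (sin (2*pi*y))"
proof -
  have "ee y = exp (\<i> * complex_of_real (2*pi*y))" unfolding ee_def by (simp add: algebra_simps)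
  also have "\<dots> = cis (2*pi*y)" by (simp add: cis_conv_exp)
  finally show ?thesis by (simp add: cis.ctr complex_eq_iff)
qed

lemma sym_set: "{- int (Suc M)..int (Suc M)} = insert (- int (Suc M)) (insert (int (Suc M)) {- int M..int M})"
  by auto

lemma sum_even: fixes u :: "int \<Rightarrow> real" assumes "\<And>a. u (-a) = u a"
  shows "(\<Sum>a\<in>{- int M..int M}. u a) = u 0 + 2 * (\<Sum>k=1..M. u (int k)) "
proof (induction M)
  case 0 then show ?case by simp
next
  case (Suc M)
  have "(\<Sum>a\<in>{- int (Suc M)..int (Suc M)}. u a) = u (- int (Suc M)) + u (int (Suc M)) + (\<Sum>a\<in>{- int M..int M}. u a)"
    unfolding sym_set by simp
  then show ?case using Suc assms[of "int (Suc M)"] by simp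
qed

lemma sum_odd: fixes u :: "int \<Rightarrow> real" assumes "\<And>a. u (-a) = - u a"
  shows "(\<Sum>a\<in>{- int M..int M}. u a) = 0"
proof (induction M)
  case 0 then show ?case using assms[of 0] by simp
next
  case (Suc M)
  have "(\<Sum>a\<in>{- int (Suc M)..int (Suc M)}. u a) = u (- int (Suc M)) + u (int (Suc M)) + (\<Sum>a\<in>{- int M..int M}. u a)"
    unfolding sym_set by simp
  then show ?case using Suc assms[of "int (Suc M)"] by simp
qed

lemma W_eq: assumes "0 \<le> h" shows "W h a = 4 * max (h - \<bar>real_of_int a\<bar>) 0 - max (2*h - \<bar>real_of_int a\<bar>) 0"
  using assms unfolding W_def by (auto simp: max_def)

lemma T_sum: assumes "0 \<le> c" "nat \<lfloor>c\<rfloor> \<le> M"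
  shows "(\<Sum>k=1..M. max (c - \<bar>real_of_int (int k)\<bar>) 0 * cos (real k * x)) = (\<Sum>k=1..nat \<lfloor>c\<rfloor>. (c - real k) * cos (real k * x))"
proof -
  have "(\<Sum>k=1..M. max (c - \<bar>real_of_int (int k)\<bar>) 0 * cos (real k * x)) = (\<Sum>k=1..nat \<lfloor>c\<rfloor>. max (c - \<bar>real_of_int (int k)\<bar>) 0 * cos (real k * x))"
  proof (rule sum.mono_neutral_right)
    show "\<forall>i\<in>{1..M} - {1..nat \<lfloor>c\<rfloor>}. max (c - \<bar>real_of_int (int i)\<bar>) 0 * cos (real i * x) = 0"
    proof
      fix i assume "i \<in> {1..M} - {1..nat \<lfloor>c\<rfloor>}"
      then have "nat \<lfloor>c\<rfloor> < i" by auto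
      then have "c < real i" using assms(1) by linarith
      then show "max (c - \<bar>real_of_int (int i)\<bar>) 0 * cos (real i * x) = 0" by simp
    qed
  qed (use assms in auto)
  also have "\<dots> = (\<Sum>k=1..nat \<lfloor>c\<rfloor>. (c - real k) * cos (real k * x))"
  proof (rule sum.cong)
    fix k assume "k \<in> {1..nat \<lfloor>c\<rfloor>}"
    then have "real k \<le> c" using assms(1) by (simp add: le_nat_floor) linarith
    then show "max (c - \<bar>real_of_int (int k)\<bar>) 0 * cos (real k * x) = (c - real k) * cos (real k * x)" by simp
  qed simp
  finally show ?thesis .
qed

lemma What_eq: assumes h: "0 \<le> h"
  shows "W_hat h \<beta> = complex_of_real (4 * Dc h (2*pi*\<beta>) - Dc (2*h) (2*pi*\<beta>))"
proof -
  define M where "M = nat \<lfloor>2*h\<rfloor>"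
  define x where "x = 2*pi*\<beta>"
  have Mi: "{-\<lfloor>2*h\<rfloor>..\<lfloor>2*h\<rfloor>} = {- int M..int M}" unfolding M_def using h by simp
  have "W_hat h \<beta> = (\<Sum>a\<in>{- int M..int M}. complex_of_real (W h a * cos (real_of_int a * x))
      + \<i> * complex_of_real (W h a * sin (real_of_int a * x)))"
    unfolding W_hat_def Mi ee_eq x_def by (intro sum.cong) (auto simp: algebra_simps)
  also have "\<dots> = complex_of_real (\<Sum>a\<in>{- int M..int M}. W h a * cos (real_of_int a * x))
      + \<i> * complex_of_real (\<Sum>a\<in>{- int M..int M}. W h a * sin (real_of_int a * x))"
    by (simp add: sum.distrib sum_distrib_left)
  also have "(\<Sum>a\<in>{- int M..int M}. W h a * sin (real_of_int a * x)) = 0"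
    by (rule sum_odd) (simp add: W_def)
  also have "(\<Sum>a\<in>{- int M..int M}. W h a * cos (real_of_int a * x))
     = W h 0 + 2 * (\<Sum>k=1..M. W h (int k) * cos (real k * x))"
    by (subst sum_even) (auto simp: W_def)
  also have "(\<Sum>k=1..M. W h (int k) * cos (real k * x))
      = 4 * (\<Sum>k=1..M. max (h - \<bar>real_of_int (int k)\<bar>) 0 * cos (real k * x))
        - (\<Sum>k=1..M. max (2*h - \<bar>real_of_int (int k)\<bar>) 0 * cos (real k * x))"
    unfolding W_eq[OF h] by (simp add: sum_distrib_left sum_subtractf[symmetric] algebra_simps)
  also have "(\<Sum>k=1..M. max (h - \<bar>real_of_int (int k)\<bar>) 0 * cos (real k * x)) = (\<Sum>k=1..nat \<lfloor>h\<rfloor>. (h - real k) * cos (real k * x))"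
    using h by (intro T_sum) (auto simp: M_def nat_mono floor_mono)
  also have "(\<Sum>k=1..M. max (2*h - \<bar>real_of_int (int k)\<bar>) 0 * cos (real k * x)) = (\<Sum>k=1..nat \<lfloor>2*h\<rfloor>. (2*h - real k) * cos (real k * x))"
    using h by (intro T_sum) (auto simp: M_def)
  finally show ?thesis unfolding Dc_def x_def[symmetric] using h by (simp add: W_eq algebra_simps)
qed

lemma ee_per: "ee (real n * (1 - y)) = ee (real n * (- y))"
proof -
  have c: "cos (2*pi*(real n * (1 - y))) = cos (2*pi*(real n * (- y)))"
  proof -
    have "cos (2*pi*(real n * (1 - y))) = cos ((2*pi) * of_int (int n) - 2*pi*real n*y)"
      by (simp add: algebra_simps)
    also have "\<dots> = cos (2*pi*(real n * (- y)))"
      unfolding cos_diff cos_int_2pin sin_int_2pin by (simp add: algebra_simps)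
    finally show ?thesis .
  qed
  have s: "sin (2*pi*(real n * (1 - y))) = sin (2*pi*(real n * (- y)))"
  proof -
    have "sin (2*pi*(real n * (1 - y))) = sin ((2*pi) * of_int (int n) - 2*pi*real n*y)"
      by (simp add: algebra_simps)
    also have "\<dots> = sin (2*pi*(real n * (- y)))"
      unfolding sin_diff cos_int_2pin sin_int_2pin by (simp add: algebra_simps)
    finally show ?thesis .
  qed
  show ?thesis unfolding ee_eq c s ..
qed

lemma S_per: "S F N (- y) = S F N (1 - y)"
  unfolding S_def ee_per ..

lemma inner_eq: assumes "0 \<le> h"
  shows "(\<Sum>j<q. W_hat h (real j / real q) * complex_of_real (S F N (- real j / real q)))
    = complex_of_real (\<Sum>j<q. (4 * Dc h (2*pi*(real j / real q)) - Dc (2*h) (2*pi*(real j / real q))) * S F N (- real j / real q))"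
  unfolding What_eq[OF assms] by simp

lemma inner_nonneg: assumes "0 \<le> h" and Sn: "\<And>\<alpha>. 0 \<le> \<alpha> \<Longrightarrow> \<alpha> \<le> 1 \<Longrightarrow> S F N \<alpha> \<ge> 0"
  shows "0 \<le> (\<Sum>j<q. (4 * Dc h (2*pi*(real j / real q)) - Dc (2*h) (2*pi*(real j / real q))) * S F N (- real j / real q))"
proof (rule sum_nonneg)
  fix j assume j: "j \<in> {..<q}"
  have "S F N (- real j / real q) = S F N (1 - real j / real q)"
    using S_per[of F N "real j / real q"] by simp
  moreover have "0 \<le> S F N (1 - real j / real q)"
  proof (rule Sn)
    have "real j / real q \<le> 1" using j by (simp add: divide_le_eq)
    then show "0 \<le> 1 - real j / real q" by simp
  qed simp
  ultimately show "0 \<le> (4 * Dc h (2*pi*(real j / real q)) - Dc (2*h) (2*pi*(real j / real q))) * S F N (- real j / real q)"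
    using Dc_pos[OF assms(1)] by simp
qed

theorem lemma2:
  fixes h Q :: "nat \<Rightarrow> real"
    and g :: "nat \<Rightarrow> nat \<Rightarrow> real"
    and f :: "nat \<Rightarrow> nat \<Rightarrow> real"
  assumes h_inf: "filterlim h at_top sequentially"
    and h_small: "(\<lambda>N. h N / real N) \<longlonglongrightarrow> 0"
    and Q_inf: "filterlim Q at_top sequentially"
    and Q_le: "\<exists>C. \<forall>\<^sub>F N in sequentially. Q N \<le> C * real N"
    and g_bound: "\<And>\<epsilon>. \<epsilon> > 0 \<Longrightarrow> \<exists>C. \<forall>\<^sub>F N in sequentially.
                    \<forall>q. 1 \<le> q \<and> real q \<le> Q N \<longrightarrow> \<bar>g N q\<bar> \<le> C * real N powr \<epsilon>"
    and S_nonneg: "\<And>N \<alpha>. 0 \<le> \<alpha> \<Longrightarrow> \<alpha> \<le> 1 \<Longrightarrow> S (f N) N \<alpha> \<ge> 0"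
  shows "\<forall>\<epsilon>>0. \<exists>C. \<forall>\<^sub>F N in sequentially.
           norm (Msum (g N) (h N) (Q N) (f N) N)
             \<le> C * real N powr \<epsilon> * Re (Msum (\<lambda>_. 1) (h N) (Q N) (f N) N)"
proof (intro allI impI)
  fix \<epsilon> :: real assume e: "\<epsilon> > 0"
  obtain C where C: "\<forall>\<^sub>F N in sequentially. \<forall>q. 1 \<le> q \<and> real q \<le> Q N \<longrightarrow> \<bar>g N q\<bar> \<le> C * real N powr \<epsilon>"
    using g_bound[OF e] by blast
  have hpos: "\<forall>\<^sub>F N in sequentially. 0 \<le> h N"
    using h_inf by (simp add: filterlim_at_top)
  show "\<exists>C. \<forall>\<^sub>F N in sequentially.
           norm (Msum (g N) (h N) (Q N) (f N) N)
             \<le> C * real N powr \<epsilon> * Re (Msum (\<lambda>_. 1) (h N) (Q N) (f N) N)"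
  proof (intro exI[of _ "max C 0"])
    show "\<forall>\<^sub>F N in sequentially.
           norm (Msum (g N) (h N) (Q N) (f N) N)
             \<le> max C 0 * real N powr \<epsilon> * Re (Msum (\<lambda>_. 1) (h N) (Q N) (f N) N)"
      using C hpos
    proof eventually_elim
      case (elim N)
      define I where "I = {q::nat. 1 \<le> q \<and> real q \<le> Q N}"
      define r where "r q = (\<Sum>j<q. (4 * Dc (h N) (2*pi*(real j / real q)) - Dc (2*h N) (2*pi*(real j / real q))) * S (f N) N (- real j / real q))" for q
      have r0: "0 \<le> r q" for q unfolding r_def
        by (rule inner_nonneg) (use elim S_nonneg in auto)
      have Ms: "Msum c (h N) (Q N) (f N) N = complex_of_real (\<Sum>q\<in>I. c q / real q * r q)" for c
        unfolding Msum_def I_def[symmetric] inner_eq[OF elim(2)] r_def by simp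
      have "norm (Msum (g N) (h N) (Q N) (f N) N) \<le> (\<Sum>q\<in>I. \<bar>g N q / real q * r q\<bar>)"
        unfolding Ms norm_of_real by (rule sum_abs)
      also have "\<dots> \<le> (\<Sum>q\<in>I. max C 0 * real N powr \<epsilon> * (1 / real q * r q))"
      proof (rule sum_mono)
        fix q assume q: "q \<in> I"
        have gq: "\<bar>g N q\<bar> \<le> max C 0 * real N powr \<epsilon>"
        proof -
          have "\<bar>g N q\<bar> \<le> C * real N powr \<epsilon>" using elim(1) q unfolding I_def by blast
          moreover have "C * real N powr \<epsilon> \<le> max C 0 * real N powr \<epsilon>" by (intro mult_right_mono) auto
          ultimately show ?thesis by linarith
        qed
        have "\<bar>g N q / real q * r q\<bar> = \<bar>g N q\<bar> * (1 / real q * r q)"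
          using r0[of q] by (simp add: abs_mult)
        also have "\<dots> \<le> max C 0 * real N powr \<epsilon> * (1 / real q * r q)"
          using gq r0[of q] by (intro mult_right_mono) auto
        finally show "\<bar>g N q / real q * r q\<bar> \<le> max C 0 * real N powr \<epsilon> * (1 / real q * r q)" .
      qed
      also have "\<dots> = max C 0 * real N powr \<epsilon> * Re (Msum (\<lambda>_. 1) (h N) (Q N) (f N) N)"
        unfolding Ms by (simp add: sum_distrib_left)
      finally show ?case .
    qed
  qed
qed

end
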